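(* Let $A\in\mathbb{R}^{m\times N}$, $K\subseteq[N]$, $0<\rho<1$ and $\tau>0$. The following are equivalent: (i) $A$ satisfies the robust binary null space property with constants $\rho,\tau$ relative to $K$; (ii) for all $x,z\in\mathbb{R}^N$ with $z-x\in H_K$, $\sum_{i\in K}x_i-\sum_{i\in K}z_i\le \rho\|(z-x)_{K^C}\|_1+\tau\|A(z-x)\|_2$; (iii) for all $z\in[0,1]^N$, $|K|-\|z_K\|_1\le\rho\|z_{K^C}\|_1+\tau\|A(z-\mathbb{1}_K)\|_2$.
   Context: $K^C=[N]\setminus K$; for $w\in\mathbb{R}^N$ and $S\subseteq[N]$, $w_S$ agrees with $w$ on $S$ and is zero elsewhere; $\mathbb{1}_K$ has entries $1$ on $K$, $0$ elsewhere. $H_K=\{w\in\mathbb{R}^N: w_i\le 0 \text{ for } i\in K,\ w_i\ge 0\text{ for } i\in K^C\}$. $A$ satisfies the robust binary null space property with constants $\rho,\tau$ relative to $K$ if $-\sum_{i\in K}v_i\le\rho\sum_{i\in K^C}v_i+\tau\|Av\|_2$ for every $v\in H_K$. *)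

theory Defs
  imports "HOL-Analysis.Analysis"
begin

text \<open>Index set [N] is the finite type 'n; R^N is real^'n, A in R^(m x N) is real^'n^'m.\<close>

definition restrict_vec :: "real^'n \<Rightarrow> 'n set \<Rightarrow> real^'n" where
  "restrict_vec w S = (\<chi> i. if i \<in> S then w $ i else 0)"

definition indicator_vec :: "'n set \<Rightarrow> real^'n" where
  "indicator_vec K = (\<chi> i. if i \<in> K then 1 else 0)"

definition l1norm :: "real^'n \<Rightarrow> real" where
  "l1norm w = (\<Sum>i\<in>UNIV. \<bar>w $ i\<bar>)"

definition H_set :: "'n set \<Rightarrow> (real^'n) set" where
  "H_set K = {w. (\<forall>i\<in>K. w $ i \<le> 0) \<and> (\<forall>i\<in>-K. w $ i \<ge> 0)}"

definition robust_binary_nsp :: "real^'n^'m \<Rightarrow> real \<Rightarrow> real \<Rightarrow> 'n set \<Rightarrow> bool" where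
  "robust_binary_nsp A \<rho> \<tau> K \<longleftrightarrow>
     (\<forall>v\<in>H_set K. - (\<Sum>i\<in>K. v $ i) \<le> \<rho> * (\<Sum>i\<in>-K. v $ i) + \<tau> * norm (A *v v))"

end

theory Submission
  imports Defs
begin

lemma l1_restrict: "l1norm (restrict_vec (w::real^'n) S) = (\<Sum>i\<in>S. \<bar>w $ i\<bar>)"
proof -
  have "l1norm (restrict_vec w S) = (\<Sum>i\<in>UNIV. if i \<in> S then \<bar>w $ i\<bar> else 0)"
    unfolding l1norm_def restrict_vec_def by (intro sum.cong) auto
  also have "\<dots> = (\<Sum>i\<in>UNIV \<inter> S. \<bar>w $ i\<bar>)" by (subst sum.inter_restrict) auto
  finally show ?thesis by simp
qed

lemma part1:
  fixes A :: "real^'n^'m"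
  shows "robust_binary_nsp A \<rho> \<tau> K
          \<longleftrightarrow> (\<forall>x z :: real^'n. z - x \<in> H_set K \<longrightarrow>
                (\<Sum>i\<in>K. x $ i) - (\<Sum>i\<in>K. z $ i)
                  \<le> \<rho> * l1norm (restrict_vec (z - x) (-K)) + \<tau> * norm (A *v (z - x)))"
proof
  assume R: "robust_binary_nsp A \<rho> \<tau> K"
  show "\<forall>x z :: real^'n. z - x \<in> H_set K \<longrightarrow>
                (\<Sum>i\<in>K. x $ i) - (\<Sum>i\<in>K. z $ i)
                  \<le> \<rho> * l1norm (restrict_vec (z - x) (-K)) + \<tau> * norm (A *v (z - x))"
  proof (intro allI impI)
    fix x z :: "real^'n" assume h: "z - x \<in> H_set K"
    have a: "(\<Sum>i\<in>-K. (z-x) $ i) = l1norm (restrict_vec (z - x) (-K))"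
      unfolding l1_restrict using h by (intro sum.cong) (auto simp: H_set_def)
    have b: "- (\<Sum>i\<in>K. (z-x) $ i) = (\<Sum>i\<in>K. x $ i) - (\<Sum>i\<in>K. z $ i)"
      by (simp add: sum_subtractf)
    from R h show "(\<Sum>i\<in>K. x $ i) - (\<Sum>i\<in>K. z $ i)
                  \<le> \<rho> * l1norm (restrict_vec (z - x) (-K)) + \<tau> * norm (A *v (z - x))"
      unfolding robust_binary_nsp_def using a b by metis
  qed
next
  assume R: "\<forall>x z :: real^'n. z - x \<in> H_set K \<longrightarrow>
                (\<Sum>i\<in>K. x $ i) - (\<Sum>i\<in>K. z $ i)
                  \<le> \<rho> * l1norm (restrict_vec (z - x) (-K)) + \<tau> * norm (A *v (z - x))"
  show "robust_binary_nsp A \<rho> \<tau> K"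
    unfolding robust_binary_nsp_def
  proof
    fix v :: "real^'n" assume h: "v \<in> H_set K"
    have a: "(\<Sum>i\<in>-K. v $ i) = l1norm (restrict_vec v (-K))"
      unfolding l1_restrict using h by (intro sum.cong) (auto simp: H_set_def)
    from R[rule_format, of v 0] h have "(\<Sum>i\<in>K. (0::real^'n) $ i) - (\<Sum>i\<in>K. v $ i)
       \<le> \<rho> * l1norm (restrict_vec v (-K)) + \<tau> * norm (A *v v)" by simp
    then show "- (\<Sum>i\<in>K. v $ i) \<le> \<rho> * (\<Sum>i\<in>-K. v $ i) + \<tau> * norm (A *v v)"
      using a by simp
  qed
qed

theorem lemma2p12:
  fixes A :: "real^'n^'m" and K :: "'n set" and \<rho> \<tau> :: real
  assumes "0 < \<rho>" and "\<rho> < 1" and "0 < \<tau>"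
  shows "(robust_binary_nsp A \<rho> \<tau> K
          \<longleftrightarrow> (\<forall>x z :: real^'n. z - x \<in> H_set K \<longrightarrow>
                (\<Sum>i\<in>K. x $ i) - (\<Sum>i\<in>K. z $ i)
                  \<le> \<rho> * l1norm (restrict_vec (z - x) (-K)) + \<tau> * norm (A *v (z - x))))
       \<and> (robust_binary_nsp A \<rho> \<tau> K
          \<longleftrightarrow> (\<forall>z :: real^'n. (\<forall>i. 0 \<le> z $ i \<and> z $ i \<le> 1) \<longrightarrow>
                real (card K) - l1norm (restrict_vec z K)
                  \<le> \<rho> * l1norm (restrict_vec z (-K)) + \<tau> * norm (A *v (z - indicator_vec K))))"
proof (intro conjI part1)
  show "robust_binary_nsp A \<rho> \<tau> K
          \<longleftrightarrow> (\<forall>z :: real^'n. (\<forall>i. 0 \<le> z $ i \<and> z $ i \<le> 1) \<longrightarrow>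
                real (card K) - l1norm (restrict_vec z K)
                  \<le> \<rho> * l1norm (restrict_vec z (-K)) + \<tau> * norm (A *v (z - indicator_vec K)))"
  proof
    assume R: "robust_binary_nsp A \<rho> \<tau> K"
    show "\<forall>z :: real^'n. (\<forall>i. 0 \<le> z $ i \<and> z $ i \<le> 1) \<longrightarrow>
                real (card K) - l1norm (restrict_vec z K)
                  \<le> \<rho> * l1norm (restrict_vec z (-K)) + \<tau> * norm (A *v (z - indicator_vec K))"
    proof (intro allI impI)
      fix z :: "real^'n" assume z: "\<forall>i. 0 \<le> z $ i \<and> z $ i \<le> 1"
      let ?v = "z - indicator_vec K"
      have hv: "?v \<in> H_set K" using z by (auto simp: H_set_def indicator_vec_def)
      have a: "(\<Sum>i\<in>-K. ?v $ i) = l1norm (restrict_vec z (-K))"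
        unfolding l1_restrict using z by (intro sum.cong) (auto simp: indicator_vec_def)
      have b: "- (\<Sum>i\<in>K. ?v $ i) = real (card K) - l1norm (restrict_vec z K)"
      proof -
        have "(\<Sum>i\<in>K. ?v $ i) = (\<Sum>i\<in>K. z $ i - 1)"
          by (intro sum.cong) (auto simp: indicator_vec_def)
        also have "\<dots> = (\<Sum>i\<in>K. z $ i) - real (card K)" by (simp add: sum_subtractf)
        finally show ?thesis unfolding l1_restrict using z by simp
      qed
      from R hv show "real (card K) - l1norm (restrict_vec z K)
                  \<le> \<rho> * l1norm (restrict_vec z (-K)) + \<tau> * norm (A *v ?v)"
        unfolding robust_binary_nsp_def using a b by metis
    qed
  next
    assume R: "\<forall>z :: real^'n. (\<forall>i. 0 \<le> z $ i \<and> z $ i \<le> 1) \<longrightarrow>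
                real (card K) - l1norm (restrict_vec z K)
                  \<le> \<rho> * l1norm (restrict_vec z (-K)) + \<tau> * norm (A *v (z - indicator_vec K))"
    show "robust_binary_nsp A \<rho> \<tau> K"
      unfolding robust_binary_nsp_def
    proof
      fix v :: "real^'n" assume h: "v \<in> H_set K"
      define t where "t = 1 + (\<Sum>i\<in>UNIV. \<bar>v $ i\<bar>)"
      have t0: "t > 0" unfolding t_def by (smt (verit) sum_nonneg abs_ge_zero)
      have tb: "\<bar>v $ i\<bar> \<le> t" for i
      proof -
        have "\<bar>v $ i\<bar> \<le> (\<Sum>i\<in>UNIV. \<bar>v $ i\<bar>)"
          by (rule member_le_sum) auto
        thus ?thesis unfolding t_def by simp
      qed
      define z where "z = (1/t) *\<^sub>R v + indicator_vec K"
      have zc: "z $ i = v $ i / t + (if i \<in> K then 1 else 0)" for i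
        unfolding z_def indicator_vec_def vector_add_component vector_scaleR_component vec_lambda_beta by simp
      have q1: "-1 \<le> a / t \<and> a / t \<le> 1" if "\<bar>a\<bar> \<le> t" for a
        using that t0 by (simp add: abs_le_iff le_divide_eq divide_le_eq)
      have q2: "a / t \<le> 0" if "a \<le> 0" for a using that t0 by (simp add: divide_nonpos_pos)
      have q3: "a / t \<ge> 0" if "a \<ge> 0" for a using that t0 by simp
      have zr: "\<forall>i. 0 \<le> z $ i \<and> z $ i \<le> 1"
      proof
        fix i
        have q: "-1 \<le> v $ i / t" "v $ i / t \<le> 1" using q1[OF tb[of i]] by auto
        show "0 \<le> z $ i \<and> z $ i \<le> 1"
        proof (cases "i \<in> K")
          case True
          then have "v $ i \<le> 0" using h unfolding H_set_def by blast
          then have "v $ i / t \<le> 0" by (rule q2)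
          then show ?thesis using q zc[of i] True by simp
        next
          case False
          then have "v $ i \<ge> 0" using h unfolding H_set_def by blast
          then have "v $ i / t \<ge> 0" by (rule q3)
          then show ?thesis using q zc[of i] False by simp
        qed
      qed
      have zi: "z - indicator_vec K = (1/t) *\<^sub>R v" unfolding z_def by simp
      have a: "l1norm (restrict_vec z (-K)) = (\<Sum>i\<in>-K. v $ i) / t"
        unfolding l1_restrict sum_divide_distrib using h t0
        by (intro sum.cong) (auto simp: zc H_set_def)
      have b: "real (card K) - l1norm (restrict_vec z K) = - (\<Sum>i\<in>K. v $ i) / t"
      proof -
        have "l1norm (restrict_vec z K) = (\<Sum>i\<in>K. v $ i / t + 1)"
          unfolding l1_restrict
        proof (intro sum.cong refl)
          fix i assume "i \<in> K"
          then have "z $ i = v $ i / t + 1" using zc[of i] by simp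
          moreover have "0 \<le> z $ i" using zr by blast
          ultimately show "\<bar>z $ i\<bar> = v $ i / t + 1" by simp
        qed
        also have "\<dots> = (\<Sum>i\<in>K. v $ i) / t + real (card K)"
          by (simp add: sum.distrib sum_divide_distrib)
        finally show ?thesis by simp
      qed
      have c: "norm (A *v (z - indicator_vec K)) = norm (A *v v) / t"
        unfolding zi using t0 by (simp add: matrix_vector_mult_scaleR)
      have "real (card K) - l1norm (restrict_vec z K)
                  \<le> \<rho> * l1norm (restrict_vec z (-K)) + \<tau> * norm (A *v (z - indicator_vec K))"
        using mp[OF spec[OF R, of z] zr] .
      then have
        "- (\<Sum>i\<in>K. v $ i) / t \<le> \<rho> * ((\<Sum>i\<in>-K. v $ i) / t) + \<tau> * (norm (A *v v) / t)"
        by (simp only: a b c)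
      then have "- (\<Sum>i\<in>K. v $ i) / t \<le> (\<rho> * (\<Sum>i\<in>-K. v $ i) + \<tau> * norm (A *v v)) / t"
        by (simp add: add_divide_distrib)
      then show "- (\<Sum>i\<in>K. v $ i) \<le> \<rho> * (\<Sum>i\<in>-K. v $ i) + \<tau> * norm (A *v v)"
        using t0 divide_right_mono[of "- (\<Sum>i\<in>K. v $ i) / t" "(\<rho> * (\<Sum>i\<in>-K. v $ i) + \<tau> * norm (A *v v)) / t" "1/t"]
        by (metis divide_le_cancel minus_divide_left)
    qed
  qed
qed

end
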